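(* Let $k$ be a field of characteristic zero, $h_0\in k\setminus\{0\}$, $\sigma\in\mathrm{Aut}_k(k[h])$ given by $\sigma(h)=h-h_0$, and let $a\in k[h]$ be a polynomial of degree $n>2$ which is reflective, i.e. there is $\rho\in k$ with $a(\rho-h)=(-1)^n a(h)$. Let $A=A(k[h],a,\sigma)$ be the generalized Weyl algebra and let $\Omega$ be the automorphism of $A$ with $\Omega(x)=y$, $\Omega(y)=(-1)^n x$, $\Omega(h)=h_0+\rho-h$. Let $\mathcal G\subset\mathrm{Aut}_k(A)$ be the subgroup generated by the torus automorphisms $\theta_w$ ($w\in k^*$) and the exponential automorphisms $\exp(\lambda\,\mathrm{ad}(x^m))$ and $\exp(\lambda\,\mathrm{ad}(y^m))$ for $\lambda\in k$, $m\geq 1$. Then $\Omega\notin\mathcal G$.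
   Context: For a $k$-algebra $R$, a central element $a\in R$ and $\sigma\in\mathrm{Aut}_k(R)$, the generalized Weyl algebra $A(R,a,\sigma)$ is the $k$-algebra generated by $R$ and two new variables $x,y$ subject to the relations $yx=a$, $xy=\sigma(a)$, $xr=\sigma(r)x$ and $ry=y\sigma(r)$ for all $r\in R$. For $w\in k^*$, $\theta_w$ is the automorphism of $A$ with $\theta_w(x)=wx$, $\theta_w(y)=w^{-1}y$, $\theta_w(h)=h$. For $u\in A$, $\mathrm{ad}(u)(b)=ub-bu$; the derivations $\mathrm{ad}(x^m)$ and $\mathrm{ad}(y^m)$ are locally nilpotent on $A$, so $\exp(\lambda\,\mathrm{ad}(u))=\sum_{i\geq0}\frac{\lambda^i}{i!}\mathrm{ad}(u)^i$ is a well-defined automorphism for $u=x^m$ or $u=y^m$. *)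

theory Defs
  imports "HOL-Computational_Algebra.Polynomial"
begin

text \<open>As a left k[h]-module A is free with basis v_i (i :: int),
 where v_i = x^i for i >= 0 and v_i = y^(-i) for i < 0.  An element
 sum_i r_i v_i is represented by the finitely supported function i \<mapsto> r_i.\<close>

definition gwa_carrier :: "(int \<Rightarrow> 'k::field poly) set" where
  "gwa_carrier = {f. finite {i. f i \<noteq> 0}}"

definition gwa_sig :: "'k::field \<Rightarrow> int \<Rightarrow> 'k poly \<Rightarrow> 'k poly" where
  "gwa_sig h0 i p = pcompose p [:- (of_int i * h0), 1:]"

text \<open>structure polynomials: v_i v_j = gwa_c i j v_(i+j)
 (x^i y^m = prod_{s=max 1 (i-m+1)}^{i} sigma^s(a) v_(i-m),
  y^m x^j = prod_{s=-m+1}^{min 0 (j-m)} sigma^s(a) v_(j-m))\<close>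
definition gwa_c :: "'k::field \<Rightarrow> 'k poly \<Rightarrow> int \<Rightarrow> int \<Rightarrow> 'k poly" where
  "gwa_c h0 a i j =
     (if 0 < i \<and> j < 0 then (\<Prod>s\<in>{max 1 (i + j + 1)..i}. gwa_sig h0 s a)
      else if i < 0 \<and> 0 < j then (\<Prod>s\<in>{i + 1..min 0 (i + j)}. gwa_sig h0 s a)
      else 1)"

text \<open>(r v_i)(s v_j) = r sigma^i(s) v_i v_j\<close>
definition gwa_mult :: "'k::field \<Rightarrow> 'k poly \<Rightarrow> (int \<Rightarrow> 'k poly) \<Rightarrow> (int \<Rightarrow> 'k poly) \<Rightarrow> (int \<Rightarrow> 'k poly)" where
  "gwa_mult h0 a f g = (\<lambda>k. \<Sum>i\<in>{i. f i \<noteq> 0}. f i * gwa_sig h0 i (g (k - i)) * gwa_c h0 a i (k - i))"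

definition gwa_add :: "(int \<Rightarrow> 'k::field poly) \<Rightarrow> (int \<Rightarrow> 'k poly) \<Rightarrow> (int \<Rightarrow> 'k poly)" where
  "gwa_add f g = (\<lambda>i. f i + g i)"

definition gwa_diff :: "(int \<Rightarrow> 'k::field poly) \<Rightarrow> (int \<Rightarrow> 'k poly) \<Rightarrow> (int \<Rightarrow> 'k poly)" where
  "gwa_diff f g = (\<lambda>i. f i - g i)"

definition gwa_smult :: "'k::field \<Rightarrow> (int \<Rightarrow> 'k poly) \<Rightarrow> (int \<Rightarrow> 'k poly)" where
  "gwa_smult c f = (\<lambda>i. smult c (f i))"

definition gwa_zero :: "int \<Rightarrow> 'k::field poly" where
  "gwa_zero = (\<lambda>i. 0)"

definition gwa_poly :: "'k::field poly \<Rightarrow> (int \<Rightarrow> 'k poly)" where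
  "gwa_poly p = (\<lambda>i. if i = 0 then p else 0)"

definition gwa_one :: "int \<Rightarrow> 'k::field poly" where
  "gwa_one = gwa_poly 1"

definition gwa_h :: "int \<Rightarrow> 'k::field poly" where
  "gwa_h = gwa_poly [:0, 1:]"

definition gwa_x :: "int \<Rightarrow> 'k::field poly" where
  "gwa_x = (\<lambda>i. if i = 1 then 1 else 0)"

definition gwa_y :: "int \<Rightarrow> 'k::field poly" where
  "gwa_y = (\<lambda>i. if i = -1 then 1 else 0)"

definition gwa_pow :: "'k::field \<Rightarrow> 'k poly \<Rightarrow> (int \<Rightarrow> 'k poly) \<Rightarrow> nat \<Rightarrow> (int \<Rightarrow> 'k poly)" where
  "gwa_pow h0 a u m = (gwa_mult h0 a u ^^ m) gwa_one"

definition gwa_aut :: "'k::field \<Rightarrow> 'k poly \<Rightarrow> ((int \<Rightarrow> 'k poly) \<Rightarrow> (int \<Rightarrow> 'k poly)) set" where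
  "gwa_aut h0 a = {\<phi>. bij_betw \<phi> gwa_carrier gwa_carrier \<and>
      (\<forall>f\<in>gwa_carrier. \<forall>g\<in>gwa_carrier.
          \<phi> (gwa_add f g) = gwa_add (\<phi> f) (\<phi> g) \<and>
          \<phi> (gwa_mult h0 a f g) = gwa_mult h0 a (\<phi> f) (\<phi> g)) \<and>
      (\<forall>c. \<forall>f\<in>gwa_carrier. \<phi> (gwa_smult c f) = gwa_smult c (\<phi> f)) \<and>
      \<phi> gwa_one = gwa_one}"

text \<open>torus automorphism theta_w: x \<mapsto> w x, y \<mapsto> w^-1 y, h \<mapsto> h, i.e. r v_i \<mapsto> w^i r v_i\<close>
definition gwa_theta :: "'k::field \<Rightarrow> (int \<Rightarrow> 'k poly) \<Rightarrow> (int \<Rightarrow> 'k poly)" where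
  "gwa_theta w f = (\<lambda>i. smult (w powi i) (f i))"

definition gwa_ad :: "'k::field \<Rightarrow> 'k poly \<Rightarrow> (int \<Rightarrow> 'k poly) \<Rightarrow> (int \<Rightarrow> 'k poly) \<Rightarrow> (int \<Rightarrow> 'k poly)" where
  "gwa_ad h0 a u b = gwa_diff (gwa_mult h0 a u b) (gwa_mult h0 a b u)"

text \<open>exp(lam ad(u)) b = sum_{i>=0} lam^i/i! ad(u)^i b, where the sum is finite
  because ad(u) is locally nilpotent (sum taken up to the first vanishing power)\<close>
definition gwa_exp_ad :: "'k::field_char_0 \<Rightarrow> 'k poly \<Rightarrow> 'k \<Rightarrow> (int \<Rightarrow> 'k poly) \<Rightarrow> (int \<Rightarrow> 'k poly) \<Rightarrow> (int \<Rightarrow> 'k poly)" where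
  "gwa_exp_ad h0 a lam u b =
     (let N = (LEAST N. (gwa_ad h0 a u ^^ N) b = gwa_zero) in
      (\<lambda>k. \<Sum>i\<le>N. smult (lam ^ i / fact i) (((gwa_ad h0 a u ^^ i) b) k)))"

definition gwa_generators :: "'k::field_char_0 \<Rightarrow> 'k poly \<Rightarrow> ((int \<Rightarrow> 'k poly) \<Rightarrow> (int \<Rightarrow> 'k poly)) set" where
  "gwa_generators h0 a =
     {gwa_theta w | w. w \<noteq> 0}
     \<union> {gwa_exp_ad h0 a lam (gwa_pow h0 a gwa_x m) | lam m. m \<ge> 1}
     \<union> {gwa_exp_ad h0 a lam (gwa_pow h0 a gwa_y m) | lam m. m \<ge> 1}"

inductive_set gen_group :: "'b set \<Rightarrow> ('b \<Rightarrow> 'b) set \<Rightarrow> ('b \<Rightarrow> 'b) set"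
  for C :: "'b set" and S :: "('b \<Rightarrow> 'b) set" where
  gen_id: "id \<in> gen_group C S"
| gen_mult: "g \<in> gen_group C S \<Longrightarrow> s \<in> S \<Longrightarrow> g \<circ> s \<in> gen_group C S"
| gen_inv: "g \<in> gen_group C S \<Longrightarrow> s \<in> S \<Longrightarrow> g \<circ> inv_into C s \<in> gen_group C S"

definition gwa_G :: "'k::field_char_0 \<Rightarrow> 'k poly \<Rightarrow> ((int \<Rightarrow> 'k poly) \<Rightarrow> (int \<Rightarrow> 'k poly)) set" where
  "gwa_G h0 a = gen_group gwa_carrier (gwa_generators h0 a)"

end

theory Submission
  imports Defs
begin


lemma sig_0[simp]: "gwa_sig h0 i 0 = 0" by (simp add: gwa_sig_def)
lemma sig_1[simp]: "gwa_sig h0 i 1 = 1" by (simp add: gwa_sig_def pcompose_1)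
lemma sig_zero_idx[simp]: "gwa_sig h0 0 p = p" by (simp add: gwa_sig_def)
lemma sig_add: "gwa_sig h0 i (p + q) = gwa_sig h0 i p + gwa_sig h0 i q"
  by (simp add: gwa_sig_def pcompose_add)
lemma sig_diff: "gwa_sig h0 i (p - q) = gwa_sig h0 i p - gwa_sig h0 i q"
  by (simp add: gwa_sig_def pcompose_diff)
lemma sig_uminus: "gwa_sig h0 i (- p) = - gwa_sig h0 i p"
  by (simp add: gwa_sig_def pcompose_uminus)
lemma sig_smult: "gwa_sig h0 i (smult c p) = smult c (gwa_sig h0 i p)"
  by (simp add: gwa_sig_def pcompose_smult)
lemma sig_mult: "gwa_sig h0 i (p * q) = gwa_sig h0 i p * gwa_sig h0 i q"
  by (simp add: gwa_sig_def pcompose_mult)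
lemma sig_prod: "gwa_sig h0 i (prod f A) = (\<Prod>x\<in>A. gwa_sig h0 i (f x))"
  by (simp add: gwa_sig_def pcompose_prod)
lemma sig_sum: "gwa_sig h0 i (sum f A) = (\<Sum>x\<in>A. gwa_sig h0 i (f x))"
  by (simp add: gwa_sig_def pcompose_sum)
lemma sig_comp: "gwa_sig h0 s (gwa_sig h0 t p) = gwa_sig h0 (s + t) p"
  unfolding gwa_sig_def pcompose_assoc[symmetric]
  by (simp add: pcompose_pCons algebra_simps)
lemma sig_degree[simp]: "degree (gwa_sig h0 i p) = degree p"
  by (simp add: gwa_sig_def degree_pcompose)
lemma sig_lead[simp]: "coeff (gwa_sig h0 i p) (degree p) = lead_coeff p"
  using lead_coeff_comp[of "[:- (of_int i * h0), 1:]" p] by (simp add: gwa_sig_def degree_pcompose)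
lemma sig_eq0[simp]: "(gwa_sig h0 i p = 0) = (p = 0)"
  by (metis sig_0 sig_comp sig_zero_idx add.left_inverse)


lemma diff_deg_lt:
  fixes p q :: "'k::field poly"
  assumes "degree p = degree q" "lead_coeff p = lead_coeff q" "p - q \<noteq> 0"
  shows "degree (p - q) < degree p"
proof (rule ccontr)
  assume "\<not> ?thesis"
  hence d: "degree (p - q) = degree p" using degree_diff_le_max[of p q] assms(1) by simp
  have "coeff (p - q) (degree (p - q)) = coeff p (degree p) - coeff q (degree q)"
    by (simp only: d assms(1) coeff_diff)
  hence "coeff (p - q) (degree (p - q)) = 0" using assms(2) by simp
  hence "p - q = 0" by (simp only: leading_coeff_0_iff)
  thus False using assms(3) by simp
qed

lemma prodsig:
  fixes a :: "'k::field poly"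
  assumes "finite S" "a \<noteq> 0"
  shows "degree (\<Prod>s\<in>S. gwa_sig h0 s a) = card S * degree a \<and>
         lead_coeff (\<Prod>s\<in>S. gwa_sig h0 s a) = lead_coeff a ^ card S \<and>
         (\<Prod>s\<in>S. gwa_sig h0 s a) \<noteq> 0"
proof -
  have nz: "(\<Prod>s\<in>S. gwa_sig h0 s a) \<noteq> 0" using assms by simp
  have l: "lead_coeff (\<Prod>s\<in>S. gwa_sig h0 s a) = lead_coeff a ^ card S"
    unfolding lead_coeff_prod by simp
  have d: "degree (\<Prod>s\<in>S. gwa_sig h0 s a) = card S * degree a"
    using assms by (subst degree_prod_sum_eq) auto
  show ?thesis using nz l d by blast
qed

lemma two_prods:
  fixes a :: "'k::field poly"
  assumes "a \<noteq> 0" "c1 = (\<Prod>s\<in>{l1..u1}. gwa_sig h0 s a)" "c2 = (\<Prod>s\<in>{l2..u2}. gwa_sig h0 s a)"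
    "nat (u1 - l1 + 1) = K" "nat (u2 - l2 + 1) = K"
  shows "degree c1 = K * degree a \<and> degree c2 = K * degree a \<and> lead_coeff c1 = lead_coeff c2
     \<and> c1 \<noteq> 0 \<and> c2 \<noteq> 0"
proof -
  have P1: "degree c1 = K * degree a \<and> lead_coeff c1 = lead_coeff a ^ K \<and> c1 \<noteq> 0"
    unfolding assms(2) using prodsig[of "{l1..u1}" a h0] assms(1,4)
    by (metis card_atLeastAtMost_int finite_atLeastAtMost_int)
  have P2: "degree c2 = K * degree a \<and> lead_coeff c2 = lead_coeff a ^ K \<and> c2 \<noteq> 0"
    unfolding assms(3) using prodsig[of "{l2..u2}" a h0] assms(1,5)
    by (metis card_atLeastAtMost_int finite_atLeastAtMost_int)
  show ?thesis using P1 P2 by metis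
qed

definition cnt :: "int \<Rightarrow> int \<Rightarrow> nat" where
  "cnt j i = (if i * j < 0 then nat (min \<bar>i\<bar> \<bar>j\<bar>) else 0)"

lemma c_props:
  fixes a :: "'k::field poly"
  assumes "a \<noteq> 0" "j \<noteq> 0"
  shows "degree (gwa_c h0 a j i) = cnt j i * degree a \<and>
         degree (gwa_c h0 a i j) = cnt j i * degree a \<and>
         lead_coeff (gwa_c h0 a j i) = lead_coeff (gwa_c h0 a i j) \<and>
         gwa_c h0 a j i \<noteq> 0 \<and> gwa_c h0 a i j \<noteq> 0"
proof -
  have P: "\<And>l u. degree (\<Prod>s\<in>{l..u::int}. gwa_sig h0 s a) = nat (u - l + 1) * degree a \<and>
         lead_coeff (\<Prod>s\<in>{l..u}. gwa_sig h0 s a) = lead_coeff a ^ nat (u - l + 1) \<and>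
         (\<Prod>s\<in>{l..u}. gwa_sig h0 s a) \<noteq> 0"
    using prodsig[OF _ assms(1)] by (metis card_atLeastAtMost_int finite_atLeastAtMost_int)
  consider "j > 0" "i < 0" | "j > 0" "i \<ge> 0" | "j < 0" "i > 0" | "j < 0" "i \<le> 0"
    using assms(2) by linarith
  then show ?thesis
  proof cases
    case 1
    have e1: "nat (j - max 1 (i + j + 1) + 1) = nat (min \<bar>i\<bar> \<bar>j\<bar>)"
         "nat (min 0 (i + j) - (i + 1) + 1) = nat (min \<bar>i\<bar> \<bar>j\<bar>)" using 1 by auto
    have "i * j < 0" using 1 by (simp add: mult_neg_pos)
    have A: "gwa_c h0 a j i = (\<Prod>s\<in>{max 1 (j + i + 1)..j}. gwa_sig h0 s a)"
      "gwa_c h0 a i j = (\<Prod>s\<in>{i + 1..min 0 (i + j)}. gwa_sig h0 s a)"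
      using 1 by (simp_all add: gwa_c_def add.commute)
    have c: "cnt j i = nat (min \<bar>i\<bar> \<bar>j\<bar>)" using \<open>i * j < 0\<close> by (simp add: cnt_def)
    show ?thesis unfolding c by (rule two_prods[OF assms(1) A]) (use 1 in auto)
  next
    case 2
    have "\<not> i * j < 0" using 2 by (simp add: not_less mult_nonneg_nonneg)
    then show ?thesis using 2 by (simp add: gwa_c_def cnt_def)
  next
    case 3
    have e1: "nat (i - max 1 (i + j + 1) + 1) = nat (min \<bar>i\<bar> \<bar>j\<bar>)"
         "nat (min 0 (j + i) - (j + 1) + 1) = nat (min \<bar>i\<bar> \<bar>j\<bar>)" using 3 by auto
    have "i * j < 0" using 3 by (simp add: mult_pos_neg)
    have A: "gwa_c h0 a j i = (\<Prod>s\<in>{j + 1..min 0 (j + i)}. gwa_sig h0 s a)"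
      "gwa_c h0 a i j = (\<Prod>s\<in>{max 1 (i + j + 1)..i}. gwa_sig h0 s a)"
      using 3 by (simp_all add: gwa_c_def add.commute)
    have c: "cnt j i = nat (min \<bar>i\<bar> \<bar>j\<bar>)" using \<open>i * j < 0\<close> by (simp add: cnt_def)
    show ?thesis unfolding c by (rule two_prods[OF assms(1) A]) (use 3 in auto)
  next
    case 4
    have "\<not> i * j < 0" using 4 by (simp add: not_less mult_nonpos_nonpos)
    then show ?thesis using 4 by (simp add: gwa_c_def cnt_def)
  qed
qed


definition Top :: "'k::field \<Rightarrow> 'k poly \<Rightarrow> int \<Rightarrow> int \<Rightarrow> 'k poly \<Rightarrow> 'k poly" where
  "Top h0 a j i r = gwa_sig h0 j r * gwa_c h0 a j i - r * gwa_c h0 a i j"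

definition Dop :: "'k::field \<Rightarrow> 'k poly \<Rightarrow> int \<Rightarrow> (int \<Rightarrow> 'k poly) \<Rightarrow> (int \<Rightarrow> 'k poly)" where
  "Dop h0 a j b = (\<lambda>k. Top h0 a j (k - j) (b (k - j)))"

definition Phi :: "'k::field poly \<Rightarrow> int \<Rightarrow> 'k poly \<Rightarrow> int \<Rightarrow> nat" where
  "Phi a j r i = degree r + degree a * (if i * j < 0 then nat \<bar>i\<bar> else 0)"

lemma Top_0[simp]: "Top h0 a j i 0 = 0" by (simp add: Top_def)

lemma Top_deg:
  fixes a :: "'k::field poly"
  assumes "a \<noteq> 0" "j \<noteq> 0" "Top h0 a j i r \<noteq> 0"
  shows "r \<noteq> 0 \<and> degree (Top h0 a j i r) < degree r + cnt j i * degree a"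
proof -
  have r: "r \<noteq> 0" using assms(3) by auto
  note C = c_props[OF assms(1,2), of h0 i]
  let ?p = "gwa_sig h0 j r * gwa_c h0 a j i" and ?q = "r * gwa_c h0 a i j"
  have dp: "degree ?p = degree r + cnt j i * degree a" using C r by (simp add: degree_mult_eq)
  have dq: "degree ?q = degree r + cnt j i * degree a" using C r by (simp add: degree_mult_eq)
  have lp: "lead_coeff ?p = lead_coeff r * lead_coeff (gwa_c h0 a j i)"
    by (metis lead_coeff_mult sig_degree sig_lead)
  have lq: "lead_coeff ?q = lead_coeff r * lead_coeff (gwa_c h0 a i j)"
    by (metis lead_coeff_mult)
  have "degree (?p - ?q) < degree ?p"
  proof (rule diff_deg_lt)
    show "degree ?p = degree ?q" using dp dq by simp
    show "lead_coeff ?p = lead_coeff ?q" using lp lq C by metis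
    show "?p - ?q \<noteq> 0" using assms(3) by (simp add: Top_def)
  qed
  thus ?thesis using r dp by (simp add: Top_def)
qed

lemma Phi_dec:
  fixes a :: "'k::field poly"
  assumes "a \<noteq> 0" "j \<noteq> 0" "Top h0 a j i r \<noteq> 0"
  shows "Phi a j (Top h0 a j i r) (i + j) < Phi a j r i"
proof -
  obtain D R d where D: "D = degree (Top h0 a j i r)" and R: "R = degree r" and d: "d = degree a" by blast
  have lt: "D < R + cnt j i * d" using Top_deg[OF assms] D R d by simp
  consider "j > 0" "i \<ge> 0" | "j > 0" "i < 0" "i + j < 0" | "j > 0" "i < 0" "i + j \<ge> 0"
    | "j < 0" "i \<le> 0" | "j < 0" "i > 0" "i + j > 0" | "j < 0" "i > 0" "i + j \<le> 0"
    using assms(2) by linarith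
  then show ?thesis
  proof cases
    case 1
    have "\<not> i * j < 0" "\<not> (i + j) * j < 0" using 1 by (simp_all add: not_less)
    then show ?thesis using lt 1 unfolding Phi_def cnt_def D[symmetric] R[symmetric] d[symmetric] by simp
  next
    case 2
    have s: "i * j < 0" "(i + j) * j < 0" using 2 by (simp_all add: mult_neg_pos)
    have c: "cnt j i = nat j" using 2 s by (simp add: cnt_def)
    have e: "nat \<bar>i\<bar> = nat \<bar>i + j\<bar> + nat j" using 2 by simp
    show ?thesis using lt s unfolding Phi_def c D[symmetric] R[symmetric] d[symmetric] e
      by (simp add: algebra_simps)
  next
    case 3
    have s: "i * j < 0" "\<not> (i + j) * j < 0" using 3 by (simp_all add: mult_neg_pos not_less)
    have c: "cnt j i = nat \<bar>i\<bar>" using 3 s by (simp add: cnt_def)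
    show ?thesis using lt s unfolding Phi_def c D[symmetric] R[symmetric] d[symmetric]
      by (simp add: algebra_simps)
  next
    case 4
    have "\<not> i * j < 0" "\<not> (i + j) * j < 0" using 4 by (simp_all add: not_less mult_nonpos_nonpos)
    then show ?thesis using lt 4 unfolding Phi_def cnt_def D[symmetric] R[symmetric] d[symmetric] by simp
  next
    case 6
    have s: "i * j < 0" "\<not> (i + j) * j < 0" using 6 by (simp_all add: mult_pos_neg not_less mult_nonpos_nonpos)
    have c: "cnt j i = nat \<bar>i\<bar>" using 6 s by (simp add: cnt_def)
    show ?thesis using lt s unfolding Phi_def c D[symmetric] R[symmetric] d[symmetric]
      by (simp add: algebra_simps)
  next
    case 5
    have s: "i * j < 0" "(i + j) * j < 0" using 5 by (simp_all add: mult_pos_neg)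
    have c: "cnt j i = nat \<bar>j\<bar>" using 5 s by (simp add: cnt_def)
    have e: "nat \<bar>i\<bar> = nat \<bar>i + j\<bar> + nat \<bar>j\<bar>" using 5 by simp
    show ?thesis using lt s unfolding Phi_def c D[symmetric] R[symmetric] d[symmetric] e
      by (simp add: algebra_simps)
  qed
qed

lemma Dop_nil_aux:
  fixes a :: "'k::field poly"
  assumes "a \<noteq> 0" "j \<noteq> 0"
  shows "\<forall>b. (\<forall>k. b k \<noteq> 0 \<longrightarrow> Phi a j (b k) k < n) \<longrightarrow> (Dop h0 a j ^^ n) b = (\<lambda>_. 0)"
proof (induction n)
  case 0
  then show ?case by auto
next
  case (Suc n)
  show ?case
  proof (intro allI impI)
    fix b :: "int \<Rightarrow> 'k poly"
    assume H: "\<forall>k. b k \<noteq> 0 \<longrightarrow> Phi a j (b k) k < Suc n"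
    have "\<forall>k. Dop h0 a j b k \<noteq> 0 \<longrightarrow> Phi a j (Dop h0 a j b k) k < n"
    proof (intro allI impI)
      fix k assume nz: "Dop h0 a j b k \<noteq> 0"
      hence nz': "Top h0 a j (k - j) (b (k - j)) \<noteq> 0" by (simp add: Dop_def)
      hence "b (k - j) \<noteq> 0" by auto
      hence "Phi a j (b (k - j)) (k - j) < Suc n" using H by blast
      moreover have "Phi a j (Top h0 a j (k - j) (b (k - j))) (k - j + j) < Phi a j (b (k - j)) (k - j)"
        by (rule Phi_dec[OF assms nz'])
      ultimately show "Phi a j (Dop h0 a j b k) k < n" by (simp add: Dop_def)
    qed
    hence "(Dop h0 a j ^^ n) (Dop h0 a j b) = (\<lambda>_. 0)" using Suc.IH by blast
    thus "(Dop h0 a j ^^ Suc n) b = (\<lambda>_. 0)" by (simp add: funpow_Suc_right del: funpow.simps)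
  qed
qed

lemma Dop_nil:
  fixes a :: "'k::field poly"
  assumes "a \<noteq> 0" "j \<noteq> 0" "b \<in> gwa_carrier"
  shows "\<exists>N. (Dop h0 a j ^^ N) b = gwa_zero"
proof -
  let ?S = "{k. b k \<noteq> 0}"
  have f: "finite ?S" using assms(3) by (simp add: gwa_carrier_def)
  have "\<forall>k. b k \<noteq> 0 \<longrightarrow> Phi a j (b k) k < Suc (\<Sum>k\<in>?S. Phi a j (b k) k)"
  proof (intro allI impI)
    fix k assume "b k \<noteq> 0"
    hence "Phi a j (b k) k \<le> (\<Sum>k\<in>?S. Phi a j (b k) k)" using f by (intro member_le_sum) auto
    thus "Phi a j (b k) k < Suc (\<Sum>k\<in>?S. Phi a j (b k) k)" by simp
  qed
  thus ?thesis using Dop_nil_aux[OF assms(1,2)] unfolding gwa_zero_def by blast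
qed



lemma Top_add: "Top h0 a j i (r + s) = Top h0 a j i r + Top h0 a j i s"
  by (simp add: Top_def sig_add algebra_simps)
lemma Top_diff: "Top h0 a j i (r - s) = Top h0 a j i r - Top h0 a j i s"
  by (simp add: Top_def sig_diff algebra_simps)
lemma Top_smult: "Top h0 a j i (smult c r) = smult c (Top h0 a j i r)"
  by (simp add: Top_def sig_smult smult_diff_right)
lemma Top_sum: "Top h0 a j i (\<Sum>l\<in>L. F l) = (\<Sum>l\<in>L. Top h0 a j i (F l))"
  by (induction L rule: infinite_finite_induct) (simp_all add: Top_add)

lemma DopN_zero: "(Dop h0 a j ^^ n) (\<lambda>_. 0) = (\<lambda>_. 0)"
  by (induction n) (simp_all add: Dop_def)

lemma DopN_diff: "(Dop h0 a j ^^ n) (\<lambda>k. f k - g k) = (\<lambda>k. (Dop h0 a j ^^ n) f k - (Dop h0 a j ^^ n) g k)"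
  by (induction n) (simp_all add: Dop_def Top_diff)
lemma DopN_add: "(Dop h0 a j ^^ n) (\<lambda>k. f k + g k) = (\<lambda>k. (Dop h0 a j ^^ n) f k + (Dop h0 a j ^^ n) g k)"
  by (induction n) (simp_all add: Dop_def Top_add)
lemma DopN_sum_smult: "(Dop h0 a j ^^ n) (\<lambda>k. \<Sum>l\<in>L. smult (c l) (F l k)) =
    (\<lambda>k. \<Sum>l\<in>L. smult (c l) ((Dop h0 a j ^^ n) (F l) k))"
  by (induction n) (simp_all add: Dop_def Top_sum Top_smult)

lemma DopN_add_exp: "(Dop h0 a j ^^ (m + n)) f = (Dop h0 a j ^^ m) ((Dop h0 a j ^^ n) f)"
  by (simp add: funpow_add)

lemma Dop_carrier: "b \<in> gwa_carrier \<Longrightarrow> Dop h0 a j b \<in> gwa_carrier"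
proof -
  assume b: "b \<in> gwa_carrier"
  have "{k. Dop h0 a j b k \<noteq> 0} \<subseteq> (\<lambda>i. i + j) ` {i. b i \<noteq> 0}"
  proof
    fix k assume "k \<in> {k. Dop h0 a j b k \<noteq> 0}"
    hence "b (k - j) \<noteq> 0" by (auto simp: Dop_def)
    thus "k \<in> (\<lambda>i. i + j) ` {i. b i \<noteq> 0}" by (intro image_eqI[of _ _ "k - j"]) auto
  qed
  thus ?thesis using b unfolding gwa_carrier_def by (auto intro: finite_subset)
qed

lemma DopN_carrier: "b \<in> gwa_carrier \<Longrightarrow> (Dop h0 a j ^^ n) b \<in> gwa_carrier"
  by (induction n) (simp_all add: Dop_carrier)

definition Ej :: "'k::field_char_0 \<Rightarrow> 'k poly \<Rightarrow> int \<Rightarrow> 'k \<Rightarrow> (int \<Rightarrow> 'k poly) \<Rightarrow> (int \<Rightarrow> 'k poly)" where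
  "Ej h0 a j lam f = (let N = (LEAST N. (Dop h0 a j ^^ N) f = gwa_zero) in
      (\<lambda>k. \<Sum>i\<le>N. smult (lam ^ i / fact i) ((Dop h0 a j ^^ i) f k)))"

lemma Ej_bound:
  assumes "(Dop h0 a j ^^ M) f = gwa_zero"
  shows "Ej h0 a j lam f = (\<lambda>k. \<Sum>i\<le>M. smult (lam ^ i / fact i) ((Dop h0 a j ^^ i) f k))"
proof -
  let ?N = "LEAST N. (Dop h0 a j ^^ N) f = gwa_zero"
  have N: "(Dop h0 a j ^^ ?N) f = gwa_zero" by (rule LeastI[of _ M]) (rule assms)
  have NM: "?N \<le> M" by (rule Least_le) (rule assms)
  have z: "(Dop h0 a j ^^ i) f = gwa_zero" if "?N \<le> i" for i
  proof -
    have "(Dop h0 a j ^^ i) f = (Dop h0 a j ^^ (i - ?N)) ((Dop h0 a j ^^ ?N) f)"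
      using that by (simp add: DopN_add_exp[symmetric])
    also have "\<dots> = gwa_zero" using N by (simp add: gwa_zero_def DopN_zero)
    finally show ?thesis .
  qed
  show ?thesis
  proof
    fix k
    have "(\<Sum>i\<le>?N. smult (lam ^ i / fact i) ((Dop h0 a j ^^ i) f k)) =
          (\<Sum>i\<le>M. smult (lam ^ i / fact i) ((Dop h0 a j ^^ i) f k))"
    proof (rule sum.mono_neutral_left)
      show "\<forall>i\<in>{..M} - {..?N}. smult (lam ^ i / fact i) ((Dop h0 a j ^^ i) f k) = 0"
        using z by (auto simp: gwa_zero_def)
    qed (use NM in auto)
    thus "Ej h0 a j lam f k = (\<Sum>i\<le>M. smult (lam ^ i / fact i) ((Dop h0 a j ^^ i) f k))"
      by (simp add: Ej_def Let_def)
  qed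
qed

lemma sum_carrier:
  assumes "finite L" "\<And>l. l \<in> L \<Longrightarrow> F l \<in> gwa_carrier"
  shows "(\<lambda>k. \<Sum>l\<in>L. smult (c l) (F l k)) \<in> gwa_carrier"
proof -
  have "{k. (\<Sum>l\<in>L. smult (c l) (F l k)) \<noteq> 0} \<subseteq> (\<Union>l\<in>L. {k. F l k \<noteq> 0})"
  proof
    fix k assume "k \<in> {k. (\<Sum>l\<in>L. smult (c l) (F l k)) \<noteq> 0}"
    hence nz: "(\<Sum>l\<in>L. smult (c l) (F l k)) \<noteq> 0" by simp
    have "\<exists>l\<in>L. smult (c l) (F l k) \<noteq> 0"
    proof (rule ccontr)
      assume "\<not> ?thesis"
      hence "(\<Sum>l\<in>L. smult (c l) (F l k)) = 0" by (intro sum.neutral) auto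
      thus False using nz by simp
    qed
    thus "k \<in> (\<Union>l\<in>L. {k. F l k \<noteq> 0})" by auto
  qed
  moreover have "finite (\<Union>l\<in>L. {k. F l k \<noteq> 0})"
    using assms by (auto simp: gwa_carrier_def)
  ultimately show ?thesis unfolding gwa_carrier_def by (auto intro: finite_subset)
qed

lemma Ej_carrier:
  assumes "a \<noteq> 0" "j \<noteq> 0" "f \<in> gwa_carrier"
  shows "Ej h0 a j lam f \<in> gwa_carrier"
proof -
  obtain M where M: "(Dop h0 a j ^^ M) f = gwa_zero" using Dop_nil[OF assms] by blast
  show ?thesis unfolding Ej_bound[OF M]
    by (rule sum_carrier) (auto intro: DopN_carrier assms(3))
qed

lemma Ej_add:
  assumes "(Dop h0 a j ^^ M) f = gwa_zero" "(Dop h0 a j ^^ M) g = gwa_zero"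
  shows "Ej h0 a j lam (\<lambda>k. f k + g k) = (\<lambda>k. Ej h0 a j lam f k + Ej h0 a j lam g k)"
proof -
  have Z: "(Dop h0 a j ^^ M) (\<lambda>k. f k + g k) = gwa_zero"
    using assms by (simp add: DopN_add gwa_zero_def)
  show ?thesis unfolding Ej_bound[OF assms(1)] Ej_bound[OF assms(2)] Ej_bound[OF Z]
    by (simp add: DopN_add smult_add_right sum.distrib)
qed

lemma Ej_surj_aux:
  fixes a :: "'k::field_char_0 poly"
  assumes "a \<noteq> 0" "j \<noteq> 0"
  shows "\<forall>f\<in>gwa_carrier. (Dop h0 a j ^^ n) f = gwa_zero \<longrightarrow>
           (\<exists>z\<in>gwa_carrier. (Dop h0 a j ^^ n) z = gwa_zero \<and> Ej h0 a j lam z = f)"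
proof (induction n)
  case 0
  show ?case
  proof (intro ballI impI)
    fix f :: "int \<Rightarrow> 'k poly" assume "f \<in> gwa_carrier" "(Dop h0 a j ^^ 0) f = gwa_zero"
    hence f0: "f = gwa_zero" by simp
    have "Ej h0 a j lam gwa_zero = gwa_zero"
      using Ej_bound[where M=0 and f=gwa_zero and lam=lam] by (simp add: gwa_zero_def)
    thus "\<exists>z\<in>gwa_carrier. (Dop h0 a j ^^ 0) z = gwa_zero \<and> Ej h0 a j lam z = f"
      using f0 by (intro bexI[of _ gwa_zero]) (auto simp: gwa_carrier_def gwa_zero_def)
  qed
next
  case (Suc n)
  show ?case
  proof (intro ballI impI)
    fix f :: "int \<Rightarrow> 'k poly"
    assume fC: "f \<in> gwa_carrier" and fN: "(Dop h0 a j ^^ Suc n) f = gwa_zero"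
    let ?c = "\<lambda>i. lam ^ i / fact i :: 'k"
    have Ef: "Ej h0 a j lam f = (\<lambda>k. \<Sum>i\<le>Suc n. smult (?c i) ((Dop h0 a j ^^ i) f k))"
      by (rule Ej_bound[OF fN])
    define g where "g = (\<lambda>k. f k - Ej h0 a j lam f k)"
    have gC: "g \<in> gwa_carrier"
    proof -
      have "{k. g k \<noteq> 0} \<subseteq> {k. f k \<noteq> 0} \<union> {k. Ej h0 a j lam f k \<noteq> 0}" by (auto simp: g_def)
      thus ?thesis using fC Ej_carrier[OF assms fC, where lam=lam] unfolding gwa_carrier_def
        by (auto intro: finite_subset)
    qed
    have hi: "(Dop h0 a j ^^ (n + i)) f = gwa_zero" if "i \<ge> 1" for i
    proof -
      have e: "n + i = (i - 1) + Suc n" using that by simp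
      have "(Dop h0 a j ^^ (n + i)) f = (Dop h0 a j ^^ (i - 1)) ((Dop h0 a j ^^ Suc n) f)"
        unfolding e by (rule DopN_add_exp)
      thus ?thesis unfolding fN gwa_zero_def by (simp add: DopN_zero)
    qed
    have gN: "(Dop h0 a j ^^ n) g = gwa_zero"
    proof -
      have "(Dop h0 a j ^^ n) (Ej h0 a j lam f) =
            (\<lambda>k. \<Sum>i\<le>Suc n. smult (?c i) ((Dop h0 a j ^^ (n + i)) f k))"
        unfolding Ef DopN_sum_smult by (simp add: DopN_add_exp)
      also have "\<dots> = (\<lambda>k. \<Sum>i\<in>{0}. smult (?c i) ((Dop h0 a j ^^ (n + i)) f k))"
      proof
        fix k
        show "(\<Sum>i\<le>Suc n. smult (?c i) ((Dop h0 a j ^^ (n + i)) f k)) =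
              (\<Sum>i\<in>{0}. smult (?c i) ((Dop h0 a j ^^ (n + i)) f k))"
          by (rule sum.mono_neutral_right) (auto simp: hi gwa_zero_def)
      qed
      also have "\<dots> = (Dop h0 a j ^^ n) f" by simp
      finally have E: "(Dop h0 a j ^^ n) (Ej h0 a j lam f) = (Dop h0 a j ^^ n) f" .
      show ?thesis unfolding g_def DopN_diff E by (simp add: gwa_zero_def)
    qed
    obtain z' where z'C: "z' \<in> gwa_carrier" and z'N: "(Dop h0 a j ^^ n) z' = gwa_zero"
      and z'E: "Ej h0 a j lam z' = g" using Suc.IH gC gN by blast
    have z'N': "(Dop h0 a j ^^ Suc n) z' = gwa_zero"
      using z'N by (simp add: Dop_def gwa_zero_def)
    define z where "z = (\<lambda>k. f k + z' k)"
    have zC: "z \<in> gwa_carrier"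
    proof -
      have "{k. z k \<noteq> 0} \<subseteq> {k. f k \<noteq> 0} \<union> {k. z' k \<noteq> 0}" by (auto simp: z_def)
      thus ?thesis using fC z'C unfolding gwa_carrier_def by (auto intro: finite_subset)
    qed
    have zN0: "(Dop h0 a j ^^ Suc n) z = (\<lambda>k. (Dop h0 a j ^^ Suc n) f k + (Dop h0 a j ^^ Suc n) z' k)"
      unfolding z_def by (rule DopN_add)
    have zN: "(Dop h0 a j ^^ Suc n) z = gwa_zero"
      unfolding zN0 fN z'N' gwa_zero_def by simp
    have "Ej h0 a j lam z = (\<lambda>k. Ej h0 a j lam f k + Ej h0 a j lam z' k)"
      unfolding z_def by (rule Ej_add[OF fN z'N'])
    also have "\<dots> = f" unfolding z'E g_def by simp
    finally show "\<exists>z\<in>gwa_carrier. (Dop h0 a j ^^ Suc n) z = gwa_zero \<and> Ej h0 a j lam z = f"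
      using zC zN by blast
  qed
qed

lemma Ej_surj:
  fixes a :: "'k::field_char_0 poly"
  assumes "a \<noteq> 0" "j \<noteq> 0" "f \<in> gwa_carrier"
  shows "f \<in> Ej h0 a j lam ` gwa_carrier"
proof -
  obtain M where M: "(Dop h0 a j ^^ M) f = gwa_zero" using Dop_nil[OF assms(1,2,3)] by blast
  show ?thesis using Ej_surj_aux[OF assms(1,2), where n=M and lam=lam] assms(3) M by force
qed



definition Wset :: "'k::field \<Rightarrow> 'k poly \<Rightarrow> 'k poly set" where
  "Wset h0 a = {gwa_sig h0 1 (a * q) - a * q | q. True}"

lemma W_0: "0 \<in> Wset h0 a"
  unfolding Wset_def by (rule CollectI, rule exI[of _ 0]) simp
lemma W_base: "gwa_sig h0 1 (a * q) - a * q \<in> Wset h0 a"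
  unfolding Wset_def by blast
lemma W_add:
  assumes "p \<in> Wset h0 a" "q \<in> Wset h0 a" shows "p + q \<in> Wset h0 a"
proof -
  obtain q1 where 1: "p = gwa_sig h0 1 (a * q1) - a * q1" using assms(1) unfolding Wset_def by blast
  obtain q2 where 2: "q = gwa_sig h0 1 (a * q2) - a * q2" using assms(2) unfolding Wset_def by blast
  have "p + q = gwa_sig h0 1 (a * (q1 + q2)) - a * (q1 + q2)"
    unfolding 1 2 by (simp add: sig_add distrib_left)
  thus ?thesis using W_base by simp
qed
lemma W_uminus:
  assumes "p \<in> Wset h0 a" shows "- p \<in> Wset h0 a"
proof -
  obtain q1 where 1: "p = gwa_sig h0 1 (a * q1) - a * q1" using assms(1) unfolding Wset_def by blast
  have "- p = gwa_sig h0 1 (a * (- q1)) - a * (- q1)"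
    unfolding 1 by (simp add: sig_uminus)
  thus ?thesis by (metis W_base)
qed
lemma W_smult:
  assumes "p \<in> Wset h0 a" shows "smult c p \<in> Wset h0 a"
proof -
  obtain q1 where 1: "p = gwa_sig h0 1 (a * q1) - a * q1" using assms(1) unfolding Wset_def by blast
  have "smult c p = gwa_sig h0 1 (a * smult c q1) - a * smult c q1"
    unfolding 1 by (simp add: sig_smult smult_diff_right)
  thus ?thesis by (metis W_base)
qed
lemma W_sum: "(\<And>l. l \<in> L \<Longrightarrow> F l \<in> Wset h0 a) \<Longrightarrow> (\<Sum>l\<in>L. F l) \<in> Wset h0 a"
  by (induction L rule: infinite_finite_induct) (simp_all add: W_0 W_add)
lemma c_neg_pos: "m > 0 \<Longrightarrow> gwa_c h0 a (- m) m = (\<Prod>s\<in>{- m + 1..0}. gwa_sig h0 s a)"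
  by (simp add: gwa_c_def)
lemma c_pos_neg: "m > 0 \<Longrightarrow> gwa_c h0 a m (- m) = (\<Prod>s\<in>{1..m}. gwa_sig h0 s a)"
  by (simp add: gwa_c_def)

lemma sig_c: 
  assumes "m > 0"
  shows "gwa_sig h0 m (gwa_c h0 a (- m) m) = gwa_c h0 a m (- m)"
proof -
  have "gwa_sig h0 m (gwa_c h0 a (- m) m) = (\<Prod>s\<in>{- m + 1..0}. gwa_sig h0 (m + s) a)"
    using assms by (simp add: c_neg_pos sig_prod sig_comp)
  also have "\<dots> = (\<Prod>s\<in>(\<lambda>s. s + m) ` {- m + 1..0}. gwa_sig h0 s a)"
    by (subst prod.reindex) (auto simp: inj_on_def add.commute)
  also have "(\<lambda>s. s + m) ` {- m + 1..0} = {1..m}" by simp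
  finally show ?thesis using assms by (simp add: c_pos_neg)
qed

lemma W_tele:
  assumes "M > (0::nat)"
  shows "gwa_sig h0 (int M) (r * gwa_c h0 a (- int M) (int M)) - r * gwa_c h0 a (- int M) (int M) \<in> Wset h0 a"
proof -
  define G where "G = r * gwa_c h0 a (- int M) (int M)"
  have dv: "a dvd gwa_sig h0 (int t) G" if "t < M" for t
  proof -
    have "gwa_sig h0 (int t) (gwa_c h0 a (- int M) (int M)) =
          (\<Prod>s\<in>{- int M + 1..0}. gwa_sig h0 (int t + s) a)"
      using assms by (simp add: c_neg_pos sig_prod sig_comp)
    moreover have "a dvd (\<Prod>s\<in>{- int M + 1..0}. gwa_sig h0 (int t + s) a)"
    proof -
      have "- int t \<in> {- int M + 1..0}" using that by auto
      hence "gwa_sig h0 (int t + - int t) a dvd (\<Prod>s\<in>{- int M + 1..0}. gwa_sig h0 (int t + s) a)"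
        by (intro dvd_prodI) auto
      thus ?thesis by simp
    qed
    ultimately show ?thesis unfolding G_def sig_mult by simp
  qed
  have "gwa_sig h0 (int M) G - G = (\<Sum>t<M. gwa_sig h0 (int (Suc t)) G - gwa_sig h0 (int t) G)"
    by (subst sum_lessThan_telescope) simp
  also have "\<dots> \<in> Wset h0 a"
  proof (rule W_sum)
    fix t assume "t \<in> {..<M}"
    then obtain q where q: "gwa_sig h0 (int t) G = a * q" using dv by (auto elim: dvdE)
    have "gwa_sig h0 (int (Suc t)) G = gwa_sig h0 1 (gwa_sig h0 (int t) G)"
      by (simp add: sig_comp add.commute)
    thus "gwa_sig h0 (int (Suc t)) G - gwa_sig h0 (int t) G \<in> Wset h0 a"
      unfolding q using W_base by simp
  qed
  finally show ?thesis unfolding G_def .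
qed

lemma Dop_W:
  assumes "j \<noteq> 0"
  shows "Dop h0 a j b 0 \<in> Wset h0 a"
proof (cases "j > 0")
  case True
  then obtain M where M: "j = int M" "M > 0" by (metis gr0I int_ops(1) less_irrefl pos_int_cases)
  have "Dop h0 a j b 0 = gwa_sig h0 (int M) (b (- int M) * gwa_c h0 a (- int M) (int M))
           - b (- int M) * gwa_c h0 a (- int M) (int M)"
    using M by (simp add: Dop_def Top_def sig_mult sig_c)
  thus ?thesis using W_tele[OF M(2)] by simp
next
  case False
  then obtain M where M: "j = - int M" "M > 0" using assms
    by (metis neg_int_cases linorder_neqE_linordered_idom of_nat_0_less_iff zero_less_Suc)
  define H where "H = gwa_sig h0 (- int M) (b (int M)) * gwa_c h0 a (- int M) (int M)"
  have "gwa_sig h0 (int M) H = b (int M) * gwa_c h0 a (int M) (- int M)"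
    using M by (simp add: H_def sig_mult sig_comp sig_c)
  hence "Dop h0 a j b 0 = - (gwa_sig h0 (int M) H - H)"
    using M by (simp add: Dop_def Top_def H_def)
  thus ?thesis using W_uminus[OF W_tele[OF M(2), of h0 "gwa_sig h0 (- int M) (b (int M))" a]]
    by (simp add: H_def)
qed

lemma Ej_W:
  assumes "j \<noteq> 0"
  shows "Ej h0 a j lam f 0 - f 0 \<in> Wset h0 a"
proof -
  define N where "N = (LEAST N. (Dop h0 a j ^^ N) f = gwa_zero)"
  have "Ej h0 a j lam f 0 - f 0 =
        (\<Sum>i\<le>N. smult (lam ^ i / fact i) ((Dop h0 a j ^^ i) f 0) - (if i = 0 then f 0 else 0))"
    by (simp add: Ej_def Let_def N_def[symmetric] sum_subtractf)
  also have "\<dots> \<in> Wset h0 a"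
  proof (rule W_sum)
    fix i assume "i \<in> {..N}"
    show "smult (lam ^ i / fact i) ((Dop h0 a j ^^ i) f 0) - (if i = 0 then f 0 else 0) \<in> Wset h0 a"
    proof (cases i)
      case 0 then show ?thesis by (simp add: W_0)
    next
      case (Suc i')
      have "(Dop h0 a j ^^ i) f 0 \<in> Wset h0 a" unfolding Suc by (simp add: Dop_W[OF assms])
      then show ?thesis using Suc by (simp add: W_smult)
    qed
  qed
  finally show ?thesis .
qed



definition ej :: "int \<Rightarrow> int \<Rightarrow> 'k::field poly" where
  "ej j = (\<lambda>i. if i = j then 1 else 0)"

lemma supp_ej: "{i. ej j i \<noteq> (0::'k::field poly)} = {j}"
  by (auto simp: ej_def)

lemma mult_ej_left: "gwa_mult h0 a (ej j) b = (\<lambda>k. gwa_sig h0 j (b (k - j)) * gwa_c h0 a j (k - j))"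
  unfolding gwa_mult_def supp_ej by (simp add: ej_def)

lemma mult_ej_right:
  assumes "b \<in> gwa_carrier"
  shows "gwa_mult h0 a b (ej j) = (\<lambda>k. b (k - j) * gwa_c h0 a (k - j) j)"
proof
  fix k
  have f: "finite {i. b i \<noteq> 0}" using assms by (simp add: gwa_carrier_def)
  have "gwa_mult h0 a b (ej j) k =
        (\<Sum>i\<in>{i. b i \<noteq> 0}. if i = k - j then b i * gwa_c h0 a i j else 0)"
    unfolding gwa_mult_def by (intro sum.cong) (auto simp: ej_def)
  also have "\<dots> = b (k - j) * gwa_c h0 a (k - j) j"
    using f by (subst sum.delta) auto
  finally show "gwa_mult h0 a b (ej j) k = b (k - j) * gwa_c h0 a (k - j) j" .
qed

lemma ad_eq: "b \<in> gwa_carrier \<Longrightarrow> gwa_ad h0 a (ej j) b = Dop h0 a j b"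
  unfolding gwa_ad_def gwa_diff_def Dop_def Top_def
  by (simp add: mult_ej_left mult_ej_right)

lemma adN_eq: "b \<in> gwa_carrier \<Longrightarrow> (gwa_ad h0 a (ej j) ^^ n) b = (Dop h0 a j ^^ n) b"
  by (induction n) (simp_all add: ad_eq DopN_carrier)

lemma exp_eq: "f \<in> gwa_carrier \<Longrightarrow> gwa_exp_ad h0 a lam (ej j) f = Ej h0 a j lam f"
  unfolding gwa_exp_ad_def Ej_def by (simp add: adN_eq)

lemma pow_x: "gwa_pow h0 a gwa_x m = ej (int m)"
proof (induction m)
  case 0
  show ?case by (auto simp: gwa_pow_def gwa_one_def gwa_poly_def ej_def)
next
  case (Suc m)
  have "gwa_pow h0 a gwa_x (Suc m) = gwa_mult h0 a gwa_x (gwa_pow h0 a gwa_x m)"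
    by (simp add: gwa_pow_def)
  also have "\<dots> = gwa_mult h0 a (ej 1) (ej (int m))"
    unfolding Suc by (simp add: gwa_x_def ej_def)
  finally show ?case unfolding mult_ej_left by (auto simp: fun_eq_iff ej_def gwa_c_def)
qed

lemma pow_y: "gwa_pow h0 a gwa_y m = ej (- int m)"
proof (induction m)
  case 0
  show ?case by (auto simp: gwa_pow_def gwa_one_def gwa_poly_def ej_def)
next
  case (Suc m)
  have "gwa_pow h0 a gwa_y (Suc m) = gwa_mult h0 a gwa_y (gwa_pow h0 a gwa_y m)"
    by (simp add: gwa_pow_def)
  also have "\<dots> = gwa_mult h0 a (ej (-1)) (ej (- int m))"
    unfolding Suc by (simp add: gwa_y_def ej_def)
  finally show ?case unfolding mult_ej_left by (auto simp: fun_eq_iff ej_def gwa_c_def)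
qed

definition goodgen :: "'k::field_char_0 \<Rightarrow> 'k poly \<Rightarrow> ((int \<Rightarrow> 'k poly) \<Rightarrow> (int \<Rightarrow> 'k poly)) \<Rightarrow> bool" where
  "goodgen h0 a s \<longleftrightarrow> (\<forall>f\<in>gwa_carrier. s f \<in> gwa_carrier \<and> s f 0 - f 0 \<in> Wset h0 a)
     \<and> gwa_carrier \<subseteq> s ` gwa_carrier"

lemma goodgen_exp:
  fixes a :: "'k::field_char_0 poly"
  assumes "a \<noteq> 0" "j \<noteq> 0"
  shows "goodgen h0 a (gwa_exp_ad h0 a lam (ej j))"
  unfolding goodgen_def
proof (intro conjI ballI subsetI)
  fix f :: "int \<Rightarrow> 'k poly" assume f: "f \<in> gwa_carrier"
  show "gwa_exp_ad h0 a lam (ej j) f \<in> gwa_carrier"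
    unfolding exp_eq[OF f] by (rule Ej_carrier[OF assms f])
  show "gwa_exp_ad h0 a lam (ej j) f 0 - f 0 \<in> Wset h0 a"
    unfolding exp_eq[OF f] by (rule Ej_W[OF assms(2)])
  obtain z where z: "z \<in> gwa_carrier" "f = Ej h0 a j lam z"
    using Ej_surj[OF assms f, where lam=lam] by blast
  show "f \<in> gwa_exp_ad h0 a lam (ej j) ` gwa_carrier"
    using z exp_eq[OF z(1)] by (metis image_eqI)
qed

lemma goodgen_theta:
  fixes w :: "'k::field_char_0"
  assumes "w \<noteq> 0"
  shows "goodgen h0 a (gwa_theta w)"
  unfolding goodgen_def
proof (intro conjI ballI subsetI)
  fix f :: "int \<Rightarrow> 'k poly" assume f: "f \<in> gwa_carrier"
  have "{i. gwa_theta w f i \<noteq> 0} \<subseteq> {i. f i \<noteq> 0}" by (auto simp: gwa_theta_def)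
  thus "gwa_theta w f \<in> gwa_carrier" using f unfolding gwa_carrier_def by (auto intro: finite_subset)
  show "gwa_theta w f 0 - f 0 \<in> Wset h0 a" by (simp add: gwa_theta_def W_0)
  have "{i. gwa_theta (inverse w) f i \<noteq> 0} \<subseteq> {i. f i \<noteq> 0}" by (auto simp: gwa_theta_def)
  hence c: "gwa_theta (inverse w) f \<in> gwa_carrier" using f unfolding gwa_carrier_def by (auto intro: finite_subset)
  have "gwa_theta w (gwa_theta (inverse w) f) = f"
  proof
    fix i
    have "w powi i * inverse w powi i = 1"
      using assms by (simp add: power_int_inverse)
    thus "gwa_theta w (gwa_theta (inverse w) f) i = f i"
      by (simp add: gwa_theta_def)
  qed
  thus "f \<in> gwa_theta w ` gwa_carrier" using c by force
qed

lemma goodgen_all: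
  fixes a :: "'k::field_char_0 poly"
  assumes "a \<noteq> 0" "s \<in> gwa_generators h0 a"
  shows "goodgen h0 a s"
  using assms(2) unfolding gwa_generators_def
proof (elim UnE CollectE exE conjE)
  fix w :: 'k assume "s = gwa_theta w" "w \<noteq> 0"
  thus ?thesis using goodgen_theta by blast
next
  fix lam and m :: nat assume "s = gwa_exp_ad h0 a lam (gwa_pow h0 a gwa_x m)" "m \<ge> 1"
  thus ?thesis unfolding pow_x using goodgen_exp[OF assms(1)] by simp
next
  fix lam and m :: nat assume "s = gwa_exp_ad h0 a lam (gwa_pow h0 a gwa_y m)" "m \<ge> 1"
  thus ?thesis unfolding pow_y using goodgen_exp[OF assms(1)] by simp
qed

lemma group_inv:
  fixes a :: "'k::field_char_0 poly"
  assumes "a \<noteq> 0" "g \<in> gwa_G h0 a"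
  shows "\<forall>f\<in>gwa_carrier. g f \<in> gwa_carrier \<and> g f 0 - f 0 \<in> Wset h0 a"
  using assms(2) unfolding gwa_G_def
proof (induction rule: gen_group.induct)
  case gen_id
  then show ?case by (simp add: W_0)
next
  case (gen_mult g s)
  have s: "goodgen h0 a s" by (rule goodgen_all[OF assms(1) gen_mult.hyps(2)])
  show ?case
  proof
    fix f :: "int \<Rightarrow> 'k poly" assume f: "f \<in> gwa_carrier"
    have 1: "s f \<in> gwa_carrier" "s f 0 - f 0 \<in> Wset h0 a" using s f unfolding goodgen_def by auto
    have 2: "g (s f) \<in> gwa_carrier" "g (s f) 0 - s f 0 \<in> Wset h0 a" using gen_mult.IH 1(1) by auto
    have "g (s f) 0 - f 0 = (g (s f) 0 - s f 0) + (s f 0 - f 0)" by simp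
    thus "(g \<circ> s) f \<in> gwa_carrier \<and> (g \<circ> s) f 0 - f 0 \<in> Wset h0 a"
      using 1 2 W_add by fastforce
  qed
next
  case (gen_inv g s)
  have s: "goodgen h0 a s" by (rule goodgen_all[OF assms(1) gen_inv.hyps(2)])
  show ?case
  proof
    fix f :: "int \<Rightarrow> 'k poly" assume f: "f \<in> gwa_carrier"
    have fi: "f \<in> s ` gwa_carrier" using s f unfolding goodgen_def by auto
    define z where "z = inv_into gwa_carrier s f"
    have zC: "z \<in> gwa_carrier" unfolding z_def by (rule inv_into_into[OF fi])
    have sz: "s z = f" unfolding z_def by (rule f_inv_into_f[OF fi])
    have 1: "f 0 - z 0 \<in> Wset h0 a" using s zC sz unfolding goodgen_def by auto
    have 2: "g z \<in> gwa_carrier" "g z 0 - z 0 \<in> Wset h0 a" using gen_inv.IH zC by auto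
    have "g z 0 - f 0 = (g z 0 - z 0) + - (f 0 - z 0)" by simp
    moreover have "(g \<circ> inv_into gwa_carrier s) f = g z" by (simp add: z_def)
    ultimately show "(g \<circ> inv_into gwa_carrier s) f \<in> gwa_carrier \<and> (g \<circ> inv_into gwa_carrier s) f 0 - f 0 \<in> Wset h0 a"
      using 1 2 W_add W_uminus by metis
  qed
qed



lemma pderiv_sig: "pderiv (gwa_sig h0 i p) = gwa_sig h0 i (pderiv p)"
  by (simp add: gwa_sig_def pderiv_pcompose pderiv_pCons)

lemma periodic_const:
  fixes h0 :: "'k::field_char_0"
  assumes "h0 \<noteq> 0" "gwa_sig h0 1 r = r"
  shows "degree r = 0"
proof -
  have per: "poly r (x - h0) = poly r x" for x
  proof -
    have "poly (gwa_sig h0 1 r) x = poly r (x - h0)" by (simp add: gwa_sig_def poly_pcompose)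
    thus ?thesis using assms(2) by simp
  qed
  have k: "poly r (- of_nat k * h0) = poly r 0" for k :: nat
  proof (induction k)
    case 0 then show ?case by simp
  next
    case (Suc k)
    have e: "- of_nat (Suc k) * h0 = - of_nat k * h0 - h0" by (simp add: algebra_simps)
    have "poly r (- of_nat (Suc k) * h0) = poly r (- of_nat k * h0 - h0)" by (simp only: e)
    also have "\<dots> = poly r (- of_nat k * h0)" by (rule per)
    finally show ?case using Suc by simp
  qed
  define r' where "r' = r - [:poly r 0:]"
  have "r' = 0"
  proof (rule ccontr)
    assume "r' \<noteq> 0"
    hence fin: "finite {x. poly r' x = 0}" by (rule poly_roots_finite)
    have "range (\<lambda>k::nat. - of_nat k * h0) \<subseteq> {x. poly r' x = 0}"
      using k by (auto simp: r'_def)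
    moreover have "infinite (range (\<lambda>k::nat. - of_nat k * h0))"
    proof (rule range_inj_infinite)
      show "inj (\<lambda>k::nat. - of_nat k * h0)" using assms(1) by (auto simp: inj_on_def)
    qed
    ultimately show False using fin finite_subset by blast
  qed
  hence "r = [:poly r 0:]" by (simp add: r'_def)
  thus ?thesis by (metis degree_pCons_0)
qed

lemma no_small:
  fixes h0 :: "'k::field_char_0" and a :: "'k poly"
  assumes "h0 \<noteq> 0" "degree a > 2" "gwa_sig h0 1 (a * q) - a * q = [:c, -2:]"
  shows False
proof -
  have a0: "a \<noteq> 0" using assms(2) by auto
  have q0: "q \<noteq> 0"
  proof
    assume "q = 0"
    hence "[:c, -2:] = (0 :: 'k poly)" using assms(3) by simp
    thus False by simp
  qed
  define p where "p = a * q"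
  have "pderiv (pderiv (gwa_sig h0 1 p - p)) = pderiv (pderiv [:c, -2:])"
    using assms(3) by (simp add: p_def)
  hence "gwa_sig h0 1 (pderiv (pderiv p)) = pderiv (pderiv p)"
    by (simp add: pderiv_diff pderiv_sig pderiv_pCons)
  hence "degree (pderiv (pderiv p)) = 0" by (rule periodic_const[OF assms(1)])
  hence "degree p \<le> 2" by (simp add: degree_pderiv)
  moreover have "degree p \<ge> degree a" using a0 q0 by (simp add: p_def degree_mult_eq)
  ultimately show False using assms(2) by simp
qed

theorem mainTheorem7:
  fixes h0 \<rho> :: "'k::field_char_0" and a :: "'k poly" and \<Omega> :: "(int \<Rightarrow> 'k poly) \<Rightarrow> (int \<Rightarrow> 'k poly)"
  assumes "h0 \<noteq> 0"
    and "degree a > 2"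
    and "pcompose a [:\<rho>, -1:] = smult ((-1) ^ degree a) a"
    and "\<Omega> \<in> gwa_aut h0 a"
    and "\<Omega> gwa_x = gwa_y"
    and "\<Omega> gwa_y = gwa_smult ((-1) ^ degree a) gwa_x"
    and "\<Omega> gwa_h = gwa_poly [:h0 + \<rho>, -1:]"
  shows "\<not> (\<exists>g\<in>gwa_G h0 a. \<forall>f\<in>gwa_carrier. \<Omega> f = g f)"
proof
  assume "\<exists>g\<in>gwa_G h0 a. \<forall>f\<in>gwa_carrier. \<Omega> f = g f"
  then obtain g where g: "g \<in> gwa_G h0 a" and eq: "\<forall>f\<in>gwa_carrier. \<Omega> f = g f" by blast
  have a0: "a \<noteq> 0" using assms(2) by auto
  have hC: "(gwa_h :: int \<Rightarrow> 'k poly) \<in> gwa_carrier"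
  proof -
    have "{i. (gwa_h :: int \<Rightarrow> 'k poly) i \<noteq> 0} \<subseteq> {0}" by (auto simp: gwa_h_def gwa_poly_def)
    thus ?thesis unfolding gwa_carrier_def by (auto intro: finite_subset)
  qed
  have "g gwa_h 0 - gwa_h 0 \<in> Wset h0 a" using group_inv[OF a0 g] hC by blast
  moreover have "g gwa_h = gwa_poly [:h0 + \<rho>, -1:]" using eq hC assms(7) by metis
  ultimately have "[:h0 + \<rho>, -1:] - [:0, 1:] \<in> Wset h0 a"
    by (simp add: gwa_poly_def gwa_h_def)
  moreover have "[:h0 + \<rho>, -1:] - [:0, 1:] = [:h0 + \<rho>, -2:]" by simp
  ultimately have "[:h0 + \<rho>, -2:] \<in> Wset h0 a" by simp
  then obtain q where "gwa_sig h0 1 (a * q) - a * q = [:h0 + \<rho>, -2:]"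
    unfolding Wset_def by auto
  thus False using no_small[OF assms(1,2)] by blast
qed


end
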